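(* Let $h$ be a harmonic function on $\mathbf D$ and $B>0$ a constant such that $|h(z)|\le B|z|$ for all $z\in\mathbf D$ and $\max_{1/6<r<1/3}h(re^{i\theta})\ge1$ for every $\theta\in[0,2\pi)$. If the integer $A$ is large enough, then the series $u(z)=\sum_{k=0}^\infty A^kh\big(z^{2^{A^k}}\big)$ converges in $\mathbf D$ to a function of class $\mathcal K$, and for some $d>0$, $$\limsup_{r\to1}\frac{u(re^{i\theta})}{|\log(1-r)|}\ge d\quad\text{for every }\theta\in[0,2\pi).$$
   Context: $\mathbf D$ is the open unit disc. $\mathcal K$ is the class of harmonic functions $u$ on $\mathbf D$ for which there is a constant $C$ with $u(z)\le C\log\frac{e}{1-|z|}$ for all $z\in\mathbf D$. *)

theory Defs
  imports "HOL-Analysis.Analysis"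
begin

abbreviation unit_disc :: "complex set" where
  "unit_disc \<equiv> ball 0 1"

text \<open>Harmonic functions on an open set S of the plane (identified with complex numbers
  z = x + i y): u is of class C^2 on S (with first partials ux, uy and second partials
  uxx, uxy, uyx, uyy, all continuous) and its Laplacian uxx + uyy vanishes on S.\<close>
definition harmonic_on :: "(complex \<Rightarrow> real) \<Rightarrow> complex set \<Rightarrow> bool" where
  "harmonic_on u S \<longleftrightarrow> open S \<and>
     (\<exists>ux uy uxx uxy uyx uyy.
        (\<forall>z\<in>S. (u has_derivative (\<lambda>w. Re w * ux z + Im w * uy z)) (at z)) \<and>
        (\<forall>z\<in>S. (ux has_derivative (\<lambda>w. Re w * uxx z + Im w * uxy z)) (at z)) \<and>
        (\<forall>z\<in>S. (uy has_derivative (\<lambda>w. Re w * uyx z + Im w * uyy z)) (at z)) \<and>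
        continuous_on S uxx \<and> continuous_on S uxy \<and>
        continuous_on S uyx \<and> continuous_on S uyy \<and>
        (\<forall>z\<in>S. uxx z + uyy z = 0))"

definition class_K :: "(complex \<Rightarrow> real) \<Rightarrow> bool" where
  "class_K u \<longleftrightarrow> harmonic_on u unit_disc \<and>
     (\<exists>C. \<forall>z\<in>unit_disc. u z \<le> C * ln (exp 1 / (1 - norm z)))"

end

theory Submission
  imports Defs
begin


lemma series_cont:
  fixes c :: "nat \<Rightarrow> complex \<Rightarrow> real"
  assumes cont: "\<And>k. continuous_on (ball 0 1) (c k)"
    and bnd: "\<And>\<rho>. 0 < \<rho> \<Longrightarrow> \<rho> < 1 \<Longrightarrow> \<exists>M. summable M \<and> (\<forall>k. \<forall>z\<in>ball 0 \<rho>. \<bar>c k z\<bar> \<le> M k)"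
  shows "continuous_on (ball 0 1) (\<lambda>z. \<Sum>k. c k z)"
proof (rule continuous_at_imp_continuous_on, intro ballI)
  fix z :: complex assume z: "z \<in> ball 0 1"
  define \<rho> where "\<rho> = (1 + norm z) / 2"
  have r: "0 < \<rho>" "\<rho> < 1" "z \<in> ball 0 \<rho>" using z by (auto simp: \<rho>_def add_pos_nonneg)
  obtain M where M: "summable M" "\<forall>k. \<forall>z\<in>ball 0 \<rho>. \<bar>c k z\<bar> \<le> M k" using bnd[OF r(1,2)] by blast
  have ul: "uniform_limit (ball 0 \<rho>) (\<lambda>n x. \<Sum>i<n. c i x) (\<lambda>x. \<Sum>i. c i x) sequentially"
    by (rule Weierstrass_m_test) (use M in auto)
  have sub: "ball 0 \<rho> \<subseteq> ball (0::complex) 1" using r by auto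
  have "continuous_on (ball 0 \<rho>) (\<lambda>x. \<Sum>i. c i x)"
    by (rule uniform_limit_theorem[OF _ ul]) (auto intro!: always_eventually continuous_on_sum continuous_on_subset[OF cont sub])
  then show "isCont (\<lambda>z. \<Sum>k. c k z) z"
    using r(3) by (simp add: continuous_on_eq_continuous_at)
qed

lemma series_deriv:
  fixes g p q :: "nat \<Rightarrow> complex \<Rightarrow> real"
  assumes deriv: "\<And>k z. z \<in> ball 0 1 \<Longrightarrow> (g k has_derivative (\<lambda>w. Re w * p k z + Im w * q k z)) (at z)"
    and bnd: "\<And>\<rho>. 0 < \<rho> \<Longrightarrow> \<rho> < 1 \<Longrightarrow> \<exists>M. summable M \<and> (\<forall>k. \<forall>z\<in>ball 0 \<rho>. \<bar>g k z\<bar> \<le> M k \<and> \<bar>p k z\<bar> \<le> M k \<and> \<bar>q k z\<bar> \<le> M k)"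
    and z: "z \<in> ball 0 1"
  shows "((\<lambda>z. \<Sum>k. g k z) has_derivative (\<lambda>w. Re w * (\<Sum>k. p k z) + Im w * (\<Sum>k. q k z))) (at z)"
proof -
  define \<rho> where "\<rho> = (1 + norm z) / 2"
  have r: "0 < \<rho>" "\<rho> < 1" "z \<in> ball 0 \<rho>" using z by (auto simp: \<rho>_def add_pos_nonneg)
  obtain M where M: "summable M" "\<And>k x. x\<in>ball 0 \<rho> \<Longrightarrow> \<bar>g k x\<bar> \<le> M k \<and> \<bar>p k x\<bar> \<le> M k \<and> \<bar>q k x\<bar> \<le> M k"
    using bnd[OF r(1,2)] by blast
  define S where "S = ball (0::complex) \<rho>"
  have sub: "S \<subseteq> ball (0::complex) 1" using r by (auto simp: S_def)
  have ulp: "uniform_limit S (\<lambda>n x. \<Sum>i<n. p i x) (\<lambda>x. \<Sum>i. p i x) sequentially"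
    by (rule Weierstrass_m_test) (use M in \<open>auto simp: S_def\<close>)
  have ulq: "uniform_limit S (\<lambda>n x. \<Sum>i<n. q i x) (\<lambda>x. \<Sum>i. q i x) sequentially"
    by (rule Weierstrass_m_test) (use M in \<open>auto simp: S_def\<close>)
  have gs: "(\<lambda>n. g n z) sums (\<Sum>k. g k z)"
    by (rule summable_sums, rule summable_comparison_test[OF _ M(1)]) (use M r in \<open>auto\<close>)
  have "\<exists>G. \<forall>x\<in>S. (\<lambda>n. g n x) sums (G x) \<and> (G has_derivative (\<lambda>w. Re w * (\<Sum>k. p k x) + Im w * (\<Sum>k. q k x))) (at x within S)"
  proof (rule has_derivative_series[where f=g and S=S and x=z and f'="\<lambda>n x w. Re w * p n x + Im w * q n x", OF _ _ _ _ gs])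
    show "convex S" by (simp add: S_def)
    show "z \<in> S" using r by (simp add: S_def)
    fix n x assume "x \<in> S"
    then show "(g n has_derivative (\<lambda>w. Re w * p n x + Im w * q n x)) (at x within S)"
      using deriv sub has_derivative_at_withinI by blast
  next
    fix e :: real assume e: "e > 0"
    have e2: "e/2 > 0" using e by simp
    have ep: "\<forall>\<^sub>F n in sequentially. \<forall>x\<in>S. dist (\<Sum>i<n. p i x) (\<Sum>i. p i x) < e/2"
      using uniform_limitD[OF ulp e2] .
    have eq: "\<forall>\<^sub>F n in sequentially. \<forall>x\<in>S. dist (\<Sum>i<n. q i x) (\<Sum>i. q i x) < e/2"
      using uniform_limitD[OF ulq e2] .
    show "\<forall>\<^sub>F n in sequentially. \<forall>x\<in>S. \<forall>h. norm ((\<Sum>i<n. Re h * p i x + Im h * q i x) - (Re h * (\<Sum>k. p k x) + Im h * (\<Sum>k. q k x))) \<le> e * norm h"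
      using ep eq
    proof eventually_elim
      case (elim n)
      show ?case
      proof (intro ballI allI)
        fix x h assume x: "x \<in> S"
        have a: "\<bar>(\<Sum>i<n. p i x) - (\<Sum>i. p i x)\<bar> \<le> e/2" using elim(1) x by (auto simp: dist_real_def)
        have b: "\<bar>(\<Sum>i<n. q i x) - (\<Sum>i. q i x)\<bar> \<le> e/2" using elim(2) x by (auto simp: dist_real_def)
        have "(\<Sum>i<n. Re h * p i x + Im h * q i x) - (Re h * (\<Sum>k. p k x) + Im h * (\<Sum>k. q k x))
              = Re h * ((\<Sum>i<n. p i x) - (\<Sum>i. p i x)) + Im h * ((\<Sum>i<n. q i x) - (\<Sum>i. q i x))"
          by (simp add: sum.distrib sum_distrib_left algebra_simps)
        also have "\<bar>\<dots>\<bar> \<le> \<bar>Re h\<bar> * (e/2) + \<bar>Im h\<bar> * (e/2)"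
          by (rule order_trans[OF abs_triangle_ineq], unfold abs_mult, intro add_mono mult_left_mono a b) auto
        also have "\<dots> \<le> norm h * (e/2) + norm h * (e/2)"
          using e by (intro add_mono mult_right_mono abs_Re_le_cmod abs_Im_le_cmod) auto
        finally show "norm ((\<Sum>i<n. Re h * p i x + Im h * q i x) - (Re h * (\<Sum>k. p k x) + Im h * (\<Sum>k. q k x))) \<le> e * norm h"
          by simp
      qed
    qed
  qed
  then obtain G where G: "\<And>x. x\<in>S \<Longrightarrow> (\<lambda>n. g n x) sums (G x)"
     "\<And>x. x\<in>S \<Longrightarrow> (G has_derivative (\<lambda>w. Re w * (\<Sum>k. p k x) + Im w * (\<Sum>k. q k x))) (at x within S)"
    by blast
  have oS: "open S" by (simp add: S_def)
  have zS: "z \<in> S" using r by (simp add: S_def)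
  have "(G has_derivative (\<lambda>w. Re w * (\<Sum>k. p k z) + Im w * (\<Sum>k. q k z))) (at z)"
    using G(2)[OF zS] at_within_open[OF zS oS] by simp
  then show ?thesis
    by (rule has_derivative_transform_within_open[OF _ oS zS]) (use G(1) sums_unique in auto)
qed




lemma harmonic_series:
  fixes g gx gy gxx gxy gyx gyy :: "nat \<Rightarrow> complex \<Rightarrow> real"
  assumes d0: "\<And>k z. z \<in> ball 0 1 \<Longrightarrow> (g k has_derivative (\<lambda>w. Re w * gx k z + Im w * gy k z)) (at z)"
    and d1: "\<And>k z. z \<in> ball 0 1 \<Longrightarrow> (gx k has_derivative (\<lambda>w. Re w * gxx k z + Im w * gxy k z)) (at z)"
    and d2: "\<And>k z. z \<in> ball 0 1 \<Longrightarrow> (gy k has_derivative (\<lambda>w. Re w * gyx k z + Im w * gyy k z)) (at z)"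
    and c: "\<And>k. continuous_on (ball 0 1) (gxx k)" "\<And>k. continuous_on (ball 0 1) (gxy k)"
           "\<And>k. continuous_on (ball 0 1) (gyx k)" "\<And>k. continuous_on (ball 0 1) (gyy k)"
    and lap: "\<And>k z. z \<in> ball 0 1 \<Longrightarrow> gxx k z + gyy k z = 0"
    and bnd: "\<And>\<rho>. 0 < \<rho> \<Longrightarrow> \<rho> < 1 \<Longrightarrow> \<exists>M. summable M \<and> (\<forall>k. \<forall>z\<in>ball 0 \<rho>.
        \<bar>g k z\<bar> \<le> M k \<and> \<bar>gx k z\<bar> \<le> M k \<and> \<bar>gy k z\<bar> \<le> M k \<and> \<bar>gxx k z\<bar> \<le> M k \<and>
        \<bar>gxy k z\<bar> \<le> M k \<and> \<bar>gyx k z\<bar> \<le> M k \<and> \<bar>gyy k z\<bar> \<le> M k)"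
  shows "harmonic_on (\<lambda>z. \<Sum>k. g k z) (ball 0 1)"
proof -
  have B3: "\<exists>M. summable M \<and> (\<forall>k. \<forall>z\<in>ball 0 \<rho>. \<bar>a k z\<bar> \<le> M k \<and> \<bar>b k z\<bar> \<le> M k \<and> \<bar>c k z\<bar> \<le> M k)"
    if rr: "0 < \<rho>" "\<rho> < 1" and abc: "a \<in> {g,gx,gy,gxx,gxy,gyx,gyy}" "b \<in> {g,gx,gy,gxx,gxy,gyx,gyy}" "c \<in> {g,gx,gy,gxx,gxy,gyx,gyy}" for \<rho> a b c
  proof -
    obtain M where M: "summable M" "\<forall>k. \<forall>z\<in>ball 0 \<rho>.
        \<bar>g k z\<bar> \<le> M k \<and> \<bar>gx k z\<bar> \<le> M k \<and> \<bar>gy k z\<bar> \<le> M k \<and> \<bar>gxx k z\<bar> \<le> M k \<and>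
        \<bar>gxy k z\<bar> \<le> M k \<and> \<bar>gyx k z\<bar> \<le> M k \<and> \<bar>gyy k z\<bar> \<le> M k" using bnd[OF rr] by blast
    have H: "\<And>f k z. f\<in>{g,gx,gy,gxx,gxy,gyx,gyy} \<Longrightarrow> z\<in>ball 0 \<rho> \<Longrightarrow> \<bar>f k z\<bar> \<le> M k" using M(2) by auto
    show ?thesis using M(1) H[OF abc(1)] H[OF abc(2)] H[OF abc(3)] by blast
  qed
  have B1: "\<exists>M. summable M \<and> (\<forall>k. \<forall>z\<in>ball 0 \<rho>. \<bar>a k z\<bar> \<le> M k)"
    if rr: "0 < \<rho>" "\<rho> < 1" and abc: "a \<in> {g,gx,gy,gxx,gxy,gyx,gyy}" for \<rho> a
    using B3[OF rr abc abc abc] by simp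
  show ?thesis
  unfolding harmonic_on_def
proof (intro conjI exI ballI)
  show "open (ball (0::complex) 1)" by simp
  fix z :: complex assume z: "z \<in> ball 0 1"
  show "((\<lambda>z. \<Sum>k. g k z) has_derivative (\<lambda>w. Re w * (\<Sum>k. gx k z) + Im w * (\<Sum>k. gy k z))) (at z)"
    by (rule series_deriv[OF _ _ z], erule d0, rule B3[of _ g gx gy]; simp)
  show "((\<lambda>z. \<Sum>k. gx k z) has_derivative (\<lambda>w. Re w * (\<Sum>k. gxx k z) + Im w * (\<Sum>k. gxy k z))) (at z)"
    by (rule series_deriv[OF _ _ z], erule d1, rule B3[of _ gx gxx gxy]; simp)
  show "((\<lambda>z. \<Sum>k. gy k z) has_derivative (\<lambda>w. Re w * (\<Sum>k. gyx k z) + Im w * (\<Sum>k. gyy k z))) (at z)"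
    by (rule series_deriv[OF _ _ z], erule d2, rule B3[of _ gy gyx gyy]; simp)
  define \<rho> where "\<rho> = (1 + norm z) / 2"
  have r: "0 < \<rho>" "\<rho> < 1" "z \<in> ball 0 \<rho>" using z by (auto simp: \<rho>_def add_pos_nonneg)
  obtain M where M: "summable M" "\<And>k. \<bar>gxx k z\<bar> \<le> M k" "\<And>k. \<bar>gyy k z\<bar> \<le> M k"
    using bnd[OF r(1,2)] r(3) by blast
  have s1: "summable (\<lambda>k. gxx k z)" by (rule summable_comparison_test[OF _ M(1)]) (use M in auto)
  have s2: "summable (\<lambda>k. gyy k z)" by (rule summable_comparison_test[OF _ M(1)]) (use M in auto)
  show "(\<Sum>k. gxx k z) + (\<Sum>k. gyy k z) = 0"
    using suminf_add[OF s1 s2] lap[OF z] by simp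
next
  show "continuous_on (ball 0 1) (\<lambda>z. \<Sum>k. gxx k z)"
    by (rule series_cont[OF c(1)], rule B1[of _ gxx]; simp)
  show "continuous_on (ball 0 1) (\<lambda>z. \<Sum>k. gxy k z)"
    by (rule series_cont[OF c(2)], rule B1[of _ gxy]; simp)
  show "continuous_on (ball 0 1) (\<lambda>z. \<Sum>k. gyx k z)"
    by (rule series_cont[OF c(3)], rule B1[of _ gyx]; simp)
  show "continuous_on (ball 0 1) (\<lambda>z. \<Sum>k. gyy k z)"
    by (rule series_cont[OF c(4)], rule B1[of _ gyy]; simp)
qed
qed




definition cgx :: "real \<Rightarrow> (complex \<Rightarrow> complex) \<Rightarrow> (complex \<Rightarrow> complex) \<Rightarrow> (complex \<Rightarrow> real) \<Rightarrow> (complex \<Rightarrow> real) \<Rightarrow> complex \<Rightarrow> real" where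
  "cgx c f f' ux uy z = c * (Re (f' z) * ux (f z) + Im (f' z) * uy (f z))"
definition cgy :: "real \<Rightarrow> (complex \<Rightarrow> complex) \<Rightarrow> (complex \<Rightarrow> complex) \<Rightarrow> (complex \<Rightarrow> real) \<Rightarrow> (complex \<Rightarrow> real) \<Rightarrow> complex \<Rightarrow> real" where
  "cgy c f f' ux uy z = c * (- Im (f' z) * ux (f z) + Re (f' z) * uy (f z))"

definition cgxx where
  "cgxx c f f' f'' ux uy uxx uxy uyx uyy z = c * (Re (f'' z) * ux (f z) + Re (f' z) * (Re (f' z) * uxx (f z) + Im (f' z) * uxy (f z))
      + Im (f'' z) * uy (f z) + Im (f' z) * (Re (f' z) * uyx (f z) + Im (f' z) * uyy (f z)))"
definition cgxy where
  "cgxy c f f' f'' ux uy uxx uxy uyx uyy z = c * (- Im (f'' z) * ux (f z) + Re (f' z) * (- Im (f' z) * uxx (f z) + Re (f' z) * uxy (f z))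
      + Re (f'' z) * uy (f z) + Im (f' z) * (- Im (f' z) * uyx (f z) + Re (f' z) * uyy (f z)))"
definition cgyx where
  "cgyx c f f' f'' ux uy uxx uxy uyx uyy z = c * (- Im (f'' z) * ux (f z) - Im (f' z) * (Re (f' z) * uxx (f z) + Im (f' z) * uxy (f z))
      + Re (f'' z) * uy (f z) + Re (f' z) * (Re (f' z) * uyx (f z) + Im (f' z) * uyy (f z)))"
definition cgyy where
  "cgyy c f f' f'' ux uy uxx uxy uyx uyy z = c * (- Re (f'' z) * ux (f z) - Im (f' z) * (- Im (f' z) * uxx (f z) + Re (f' z) * uxy (f z))
      - Im (f'' z) * uy (f z) + Re (f' z) * (- Im (f' z) * uyx (f z) + Re (f' z) * uyy (f z)))"

lemma comp_d0:
  assumes hu: "(h has_derivative (\<lambda>w. Re w * ux (f z) + Im w * uy (f z))) (at (f z))"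
    and f1: "(f has_field_derivative f' z) (at z)"
  shows "((\<lambda>z. c * h (f z)) has_derivative (\<lambda>w. Re w * cgx c f f' ux uy z + Im w * cgy c f f' ux uy z)) (at z)"
proof -
  have "((\<lambda>z. h (f z)) has_derivative (\<lambda>w. Re (f' z * w) * ux (f z) + Im (f' z * w) * uy (f z))) (at z)"
    using has_derivative_compose[OF has_field_derivative_imp_has_derivative[OF f1] hu] by simp
  then have "((\<lambda>z. c * h (f z)) has_derivative (\<lambda>w. c * (Re (f' z * w) * ux (f z) + Im (f' z * w) * uy (f z)))) (at z)"
    by (rule has_derivative_mult_right)
  then show ?thesis
    by (rule has_derivative_eq_rhs) (auto simp: cgx_def cgy_def algebra_simps)
qed

lemma comp_dxy:
  assumes dx: "(ux has_derivative (\<lambda>w. Re w * uxx (f z) + Im w * uxy (f z))) (at (f z))"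
    and dy: "(uy has_derivative (\<lambda>w. Re w * uyx (f z) + Im w * uyy (f z))) (at (f z))"
    and f1: "(f has_field_derivative f' z) (at z)" and f2: "(f' has_field_derivative f'' z) (at z)"
  shows "(cgx c f f' ux uy has_derivative (\<lambda>w. Re w * cgxx c f f' f'' ux uy uxx uxy uyx uyy z + Im w * cgxy c f f' f'' ux uy uxx uxy uyx uyy z)) (at z)"
    and "(cgy c f f' ux uy has_derivative (\<lambda>w. Re w * cgyx c f f' f'' ux uy uxx uxy uyx uyy z + Im w * cgyy c f f' f'' ux uy uxx uxy uyx uyy z)) (at z)"
proof -
  have Ux: "((\<lambda>z. ux (f z)) has_derivative (\<lambda>w. Re (f' z * w) * uxx (f z) + Im (f' z * w) * uxy (f z))) (at z)"
    using has_derivative_compose[OF has_field_derivative_imp_has_derivative[OF f1] dx] by simp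
  have Uy: "((\<lambda>z. uy (f z)) has_derivative (\<lambda>w. Re (f' z * w) * uyx (f z) + Im (f' z * w) * uyy (f z))) (at z)"
    using has_derivative_compose[OF has_field_derivative_imp_has_derivative[OF f1] dy] by simp
  have Fa: "((\<lambda>z. Re (f' z)) has_derivative (\<lambda>w. Re (f'' z * w))) (at z)"
    using has_derivative_Re[OF has_field_derivative_imp_has_derivative[OF f2]] .
  have Fb: "((\<lambda>z. Im (f' z)) has_derivative (\<lambda>w. Im (f'' z * w))) (at z)"
    using has_derivative_Im[OF has_field_derivative_imp_has_derivative[OF f2]] .
  have "((\<lambda>z. c * (Re (f' z) * ux (f z) + Im (f' z) * uy (f z))) has_derivative
      (\<lambda>w. c * ((Re (f' z) * (Re (f' z * w) * uxx (f z) + Im (f' z * w) * uxy (f z)) + Re (f'' z * w) * ux (f z)) +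
         (Im (f' z) * (Re (f' z * w) * uyx (f z) + Im (f' z * w) * uyy (f z)) + Im (f'' z * w) * uy (f z))))) (at z)"
    by (intro has_derivative_mult_right has_derivative_add has_derivative_mult Fa Fb Ux Uy)
  then show "(cgx c f f' ux uy has_derivative (\<lambda>w. Re w * cgxx c f f' f'' ux uy uxx uxy uyx uyy z + Im w * cgxy c f f' f'' ux uy uxx uxy uyx uyy z)) (at z)"
    unfolding cgx_def[abs_def]
    by (rule has_derivative_eq_rhs) (auto simp: cgxx_def cgxy_def algebra_simps)
  have "((\<lambda>z. c * (- Im (f' z) * ux (f z) + Re (f' z) * uy (f z))) has_derivative
      (\<lambda>w. c * ((- Im (f' z) * (Re (f' z * w) * uxx (f z) + Im (f' z * w) * uxy (f z)) + - Im (f'' z * w) * ux (f z)) +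
         (Re (f' z) * (Re (f' z * w) * uyx (f z) + Im (f' z * w) * uyy (f z)) + Re (f'' z * w) * uy (f z))))) (at z)"
    by (intro has_derivative_mult_right has_derivative_add has_derivative_mult has_derivative_minus Fa Fb Ux Uy)
  then show "(cgy c f f' ux uy has_derivative (\<lambda>w. Re w * cgyx c f f' f'' ux uy uxx uxy uyx uyy z + Im w * cgyy c f f' f'' ux uy uxx uxy uyx uyy z)) (at z)"
    unfolding cgy_def[abs_def]
    by (rule has_derivative_eq_rhs) (auto simp: cgyx_def cgyy_def algebra_simps)
qed

lemma comp_lap:
  assumes "uxx (f z) + uyy (f z) = 0"
  shows "cgxx c f f' f'' ux uy uxx uxy uyx uyy z + cgyy c f f' f'' ux uy uxx uxy uyx uyy z = 0"
proof -
  have "cgxx c f f' f'' ux uy uxx uxy uyx uyy z + cgyy c f f' f'' ux uy uxx uxy uyx uyy z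
      = c * ((Re (f' z))^2 + (Im (f' z))^2) * (uxx (f z) + uyy (f z))"
    by (simp add: cgxx_def cgyy_def algebra_simps power2_eq_square)
  then show ?thesis using assms by simp
qed




lemma expr_bound:
  fixes a b a' b' a3 b3 a2 b2 x1 x2 x3 x4 x5 x6 p q M :: real
  assumes "\<bar>a\<bar> \<le> p" "\<bar>b\<bar> \<le> p" "\<bar>a'\<bar> \<le> p" "\<bar>b'\<bar> \<le> p" "\<bar>a3\<bar> \<le> p" "\<bar>b3\<bar> \<le> p"
    "\<bar>a2\<bar> \<le> q" "\<bar>b2\<bar> \<le> q" "\<bar>x1\<bar> \<le> M" "\<bar>x2\<bar> \<le> M" "\<bar>x3\<bar> \<le> M" "\<bar>x4\<bar> \<le> M" "\<bar>x5\<bar> \<le> M" "\<bar>x6\<bar> \<le> M"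
    "p * p \<le> q" "0 \<le> M"
  shows "\<bar>a2*x1 + a*(a'*x3 + b'*x4) + b2*x2 + b*(a3*x5 + b3*x6)\<bar> \<le> 6*q*M"
proof -
  have p0: "0 \<le> p" using assms(1) by linarith
  have m: "\<bar>u * v\<bar> \<le> s * M" if "\<bar>u\<bar> \<le> s" "\<bar>v\<bar> \<le> M" for u v s
    unfolding abs_mult by (rule mult_mono) (use that in auto)
  have i1: "\<bar>a'*x3 + b'*x4\<bar> \<le> 2*(p*M)" using m[OF assms(3,11)] m[OF assms(4,12)] by linarith
  have i2: "\<bar>a3*x5 + b3*x6\<bar> \<le> 2*(p*M)" using m[OF assms(5,13)] m[OF assms(6,14)] by linarith
  have j1: "\<bar>a*(a'*x3 + b'*x4)\<bar> \<le> p*(2*(p*M))" unfolding abs_mult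
    by (rule mult_mono) (use assms(1) i1 p0 in auto)
  have j2: "\<bar>b*(a3*x5 + b3*x6)\<bar> \<le> p*(2*(p*M))" unfolding abs_mult
    by (rule mult_mono) (use assms(2) i2 p0 in auto)
  have pp: "p*(2*(p*M)) \<le> 2*(q*M)" using mult_right_mono[OF assms(15) assms(16)] by (simp add: algebra_simps)
  show ?thesis using m[OF assms(7,9)] m[OF assms(8,10)] j1 j2 pp by linarith
qed

lemma cg2_bounds:
  fixes c p q M :: real
  assumes c: "0 \<le> c" and f1: "cmod (f' z) \<le> p" and f2: "cmod (f'' z) \<le> q" and pq: "p * p \<le> q" "p \<le> q" and M: "0 \<le> M"
    and u: "\<bar>ux (f z)\<bar> \<le> M" "\<bar>uy (f z)\<bar> \<le> M" "\<bar>uxx (f z)\<bar> \<le> M" "\<bar>uxy (f z)\<bar> \<le> M" "\<bar>uyx (f z)\<bar> \<le> M" "\<bar>uyy (f z)\<bar> \<le> M"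
  shows "\<bar>cgx c f f' ux uy z\<bar> \<le> c * (6*q*M)" "\<bar>cgy c f f' ux uy z\<bar> \<le> c * (6*q*M)"
    "\<bar>cgxx c f f' f'' ux uy uxx uxy uyx uyy z\<bar> \<le> c * (6*q*M)"
    "\<bar>cgxy c f f' f'' ux uy uxx uxy uyx uyy z\<bar> \<le> c * (6*q*M)"
    "\<bar>cgyx c f f' f'' ux uy uxx uxy uyx uyy z\<bar> \<le> c * (6*q*M)"
    "\<bar>cgyy c f f' f'' ux uy uxx uxy uyx uyy z\<bar> \<le> c * (6*q*M)"
proof -
  have a: "\<bar>Re (f' z)\<bar> \<le> p" "\<bar>Im (f' z)\<bar> \<le> p" "\<bar>- Re (f' z)\<bar> \<le> p" "\<bar>- Im (f' z)\<bar> \<le> p"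
    using abs_Re_le_cmod[of "f' z"] abs_Im_le_cmod[of "f' z"] f1 by auto
  have b: "\<bar>Re (f'' z)\<bar> \<le> q" "\<bar>Im (f'' z)\<bar> \<le> q" "\<bar>- Re (f'' z)\<bar> \<le> q" "\<bar>- Im (f'' z)\<bar> \<le> q"
    using abs_Re_le_cmod[of "f'' z"] abs_Im_le_cmod[of "f'' z"] f2 by auto
  have first: "\<bar>u1 * v1 + u2 * v2\<bar> \<le> 6*q*M" if "\<bar>u1\<bar> \<le> p" "\<bar>u2\<bar> \<le> p" "\<bar>v1\<bar> \<le> M" "\<bar>v2\<bar> \<le> M" for u1 u2 v1 v2 :: real
  proof -
    have "\<bar>u1 * v1\<bar> \<le> p * M" "\<bar>u2 * v2\<bar> \<le> p * M" unfolding abs_mult using that M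
      by (auto intro!: mult_mono)
    moreover have "p * M \<le> q * M" using pq(2) M by (rule mult_right_mono)
    moreover have "0 \<le> q" using pq(1) by (metis zero_le_square order_trans)
    then have "0 \<le> q * M" using M by simp
    ultimately show ?thesis using abs_triangle_ineq[of "u1 * v1" "u2 * v2"] by linarith
  qed
  show "\<bar>cgx c f f' ux uy z\<bar> \<le> c * (6*q*M)" unfolding cgx_def abs_mult abs_of_nonneg[OF c] using c
    by (intro mult_left_mono first a u) auto
  show "\<bar>cgy c f f' ux uy z\<bar> \<le> c * (6*q*M)" unfolding cgy_def abs_mult abs_of_nonneg[OF c] using c
    by (intro mult_left_mono first a u) auto
  show "\<bar>cgxx c f f' f'' ux uy uxx uxy uyx uyy z\<bar> \<le> c * (6*q*M)" unfolding cgxx_def abs_mult abs_of_nonneg[OF c] using c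
    by (intro mult_left_mono expr_bound[where p=p and q=q and M=M] a b u pq M) auto
  show "\<bar>cgxy c f f' f'' ux uy uxx uxy uyx uyy z\<bar> \<le> c * (6*q*M)" unfolding cgxy_def abs_mult abs_of_nonneg[OF c] using c
    by (intro mult_left_mono expr_bound[where p=p and q=q and M=M] a b u pq M) auto
  have e1: "cgyx c f f' f'' ux uy uxx uxy uyx uyy z = c * (- Im (f'' z) * ux (f z) + (- Im (f' z)) * (Re (f' z) * uxx (f z) + Im (f' z) * uxy (f z))
      + Re (f'' z) * uy (f z) + Re (f' z) * (Re (f' z) * uyx (f z) + Im (f' z) * uyy (f z)))"
    by (simp add: cgyx_def)
  show "\<bar>cgyx c f f' f'' ux uy uxx uxy uyx uyy z\<bar> \<le> c * (6*q*M)" unfolding e1 abs_mult abs_of_nonneg[OF c] using c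
    by (intro mult_left_mono expr_bound[where p=p and q=q and M=M] a b u pq M) auto
  have e2: "cgyy c f f' f'' ux uy uxx uxy uyx uyy z = c * (- Re (f'' z) * ux (f z) + (- Im (f' z)) * (- Im (f' z) * uxx (f z) + Re (f' z) * uxy (f z))
      + (- Im (f'' z)) * uy (f z) + Re (f' z) * (- Im (f' z) * uyx (f z) + Re (f' z) * uyy (f z)))"
    by (simp add: cgyy_def)
  show "\<bar>cgyy c f f' f'' ux uy uxx uxy uyx uyy z\<bar> \<le> c * (6*q*M)" unfolding e2 abs_mult abs_of_nonneg[OF c] using c
    by (intro mult_left_mono expr_bound[where p=p and q=q and M=M] a b u pq M) auto
qed

lemma poly_geom_bound:
  fixes \<rho> :: real
  assumes "0 < \<rho>" "\<rho> < 1"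
  shows "\<exists>C. \<forall>n. real n ^ 3 * \<rho> ^ n \<le> C * sqrt \<rho> ^ n"
proof -
  define \<tau> where "\<tau> = root 6 \<rho>"
  have t: "0 < \<tau>" "\<tau> < 1" using assms by (auto simp: \<tau>_def)
  have t6: "\<tau> ^ 6 = \<rho>" using assms by (simp add: \<tau>_def)
  have t3: "\<tau> ^ 3 = sqrt \<rho>"
  proof -
    have "(\<tau> ^ 3)\<^sup>2 = \<rho>" using t6 by (simp add: power_mult[symmetric])
    then show ?thesis using t by (metis real_sqrt_unique zero_le_power less_imp_le)
  qed
  have "(\<lambda>n. of_nat n * \<tau> ^ n) \<longlonglongrightarrow> 0" using t by (intro powser_times_n_limit_0) auto
  then have "(\<lambda>n. (of_nat n * \<tau> ^ n) ^ 3) \<longlonglongrightarrow> 0 ^ 3" by (rule tendsto_power)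
  then have "bounded (range (\<lambda>n. (of_nat n * \<tau> ^ n) ^ 3))" by (intro convergent_imp_bounded convergentI)
  then obtain C where C: "\<And>n. norm ((of_nat n * \<tau> ^ n) ^ 3) \<le> C" by (auto simp: bounded_iff)
  show ?thesis
  proof (intro exI allI)
    fix n
    have e1: "\<rho> ^ n = (\<tau> ^ 3) ^ n * (\<tau> ^ 3) ^ n"
    proof -
      have "(\<tau> ^ 3) ^ n * (\<tau> ^ 3) ^ n = (\<tau> ^ 3 * \<tau> ^ 3) ^ n" by (rule power_mult_distrib[symmetric])
      also have "\<tau> ^ 3 * \<tau> ^ 3 = \<rho>" using t6 by (simp add: power_add[symmetric])
      finally show ?thesis by simp
    qed
    have e2: "(of_nat n * \<tau> ^ n) ^ 3 = real n ^ 3 * (\<tau> ^ 3) ^ n"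
      by (simp add: power_mult_distrib power_mult[symmetric] mult.commute)
    have "real n ^ 3 * \<rho> ^ n = (of_nat n * \<tau> ^ n) ^ 3 * (\<tau> ^ 3) ^ n"
      unfolding e1 e2 by simp
    also have "\<dots> \<le> C * sqrt \<rho> ^ n" unfolding t3
      by (rule mult_right_mono) (use C[of n] assms in auto)
    finally show "real n ^ 3 * \<rho> ^ n \<le> C * sqrt \<rho> ^ n" .
  qed
qed




lemma cont_bound_cball:
  fixes u :: "complex \<Rightarrow> real"
  assumes "continuous_on (ball 0 1) u" "0 < \<rho>" "\<rho> < 1"
  shows "\<exists>M\<ge>0. \<forall>w\<in>cball 0 \<rho>. \<bar>u w\<bar> \<le> M"
proof -
  have "cball 0 \<rho> \<subseteq> ball (0::complex) 1" using assms by auto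
  then have "compact (u ` cball 0 \<rho>)"
    by (intro compact_continuous_image continuous_on_subset[OF assms(1)]) auto
  then obtain M where "M > 0" "\<forall>x\<in>u ` cball 0 \<rho>. norm x \<le> M"
    using compact_imp_bounded bounded_pos by metis
  then show ?thesis by (intro exI[of _ M]) auto
qed

lemma N_facts:
  fixes A k :: nat assumes "A \<ge> 2"
  shows "2 \<le> (2::nat) ^ (A ^ k)" "k \<le> (2::nat) ^ (A ^ k)" "real A ^ k \<le> real ((2::nat) ^ (A ^ k))"
proof -
  have a1: "1 \<le> A ^ k" using assms by simp
  have "2 ^ 1 \<le> (2::nat) ^ (A ^ k)" by (rule power_increasing[OF a1]) auto
  then show "2 \<le> (2::nat) ^ (A ^ k)" by simp
  have "k < 2 ^ k" by (rule less_exp)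
  also have "(2::nat) ^ k \<le> A ^ k" using assms by (intro power_mono) auto
  also have "A ^ k < 2 ^ (A ^ k)" by (rule less_exp)
  finally show "k \<le> (2::nat) ^ (A ^ k)" by simp
  have "A ^ k \<le> (2::nat) ^ (A ^ k)" using less_exp[of "A^k"] by simp
  then show "real A ^ k \<le> real ((2::nat) ^ (A ^ k))" by (metis of_nat_le_iff of_nat_power)
qed

lemma harmonic_sum_main:
  fixes h :: "complex \<Rightarrow> real" and A :: nat and B :: real
  assumes harm: "harmonic_on h (ball 0 1)" and B: "B > 0" and hb: "\<forall>z\<in>ball 0 1. \<bar>h z\<bar> \<le> B * norm z"
    and A: "A \<ge> 2"
  shows "harmonic_on (\<lambda>z. \<Sum>k. real A ^ k * h (z ^ (2 ^ (A ^ k)))) (ball 0 1)"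
proof -
  obtain ux uy uxx uxy uyx uyy where
    H0': "\<forall>z\<in>ball 0 1. (h has_derivative (\<lambda>w. Re w * ux z + Im w * uy z)) (at z)" and
    H1': "\<forall>z\<in>ball 0 1. (ux has_derivative (\<lambda>w. Re w * uxx z + Im w * uxy z)) (at z)" and
    H2': "\<forall>z\<in>ball 0 1. (uy has_derivative (\<lambda>w. Re w * uyx z + Im w * uyy z)) (at z)" and
    C: "continuous_on (ball 0 1) uxx" "continuous_on (ball 0 1) uxy"
       "continuous_on (ball 0 1) uyx" "continuous_on (ball 0 1) uyy" and
    L': "\<forall>z\<in>ball 0 1. uxx z + uyy z = 0"
    using harm unfolding harmonic_on_def by (elim conjE exE) (rule that; assumption)
  have H0: "\<And>z. z\<in>ball 0 1 \<Longrightarrow> (h has_derivative (\<lambda>w. Re w * ux z + Im w * uy z)) (at z)" using H0' by blast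
  have H1: "\<And>z. z\<in>ball 0 1 \<Longrightarrow> (ux has_derivative (\<lambda>w. Re w * uxx z + Im w * uxy z)) (at z)" using H1' by blast
  have H2: "\<And>z. z\<in>ball 0 1 \<Longrightarrow> (uy has_derivative (\<lambda>w. Re w * uyx z + Im w * uyy z)) (at z)" using H2' by blast
  have L: "\<And>z. z\<in>ball 0 1 \<Longrightarrow> uxx z + uyy z = 0" using L' by blast
  have Cx: "continuous_on (ball 0 1) ux"
    by (rule continuous_at_imp_continuous_on) (use H1 has_derivative_continuous in blast)
  have Cy: "continuous_on (ball 0 1) uy"
    by (rule continuous_at_imp_continuous_on) (use H2 has_derivative_continuous in blast)
  define N where "N k = (2::nat) ^ (A ^ k)" for k
  define F where "F k = (\<lambda>z::complex. z ^ N k)" for k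
  define F1 where "F1 k = (\<lambda>z::complex. of_nat (N k) * z ^ (N k - 1))" for k
  define F2 where "F2 k = (\<lambda>z::complex. of_nat (N k) * (of_nat (N k - 1) * z ^ (N k - 1 - 1)))" for k
  define c where "c k = real A ^ k" for k
  have N2: "2 \<le> N k" "k \<le> N k" "c k \<le> real (N k)" for k
    using N_facts[OF A, of k] by (auto simp: N_def c_def)
  have c0: "0 \<le> c k" for k by (simp add: c_def)
  have dF: "(F k has_field_derivative F1 k z) (at z)" for k z
    using DERIV_power[OF DERIV_ident, where x=z and n="N k" and s=UNIV] by (simp add: F_def F1_def)
  have dF1: "(F1 k has_field_derivative F2 k z) (at z)" for k z
    unfolding F1_def F2_def
    using DERIV_cmult[OF DERIV_power[OF DERIV_ident, where x=z and n="N k - 1" and s=UNIV], of "of_nat (N k)"] by simp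
  have Fle: "norm (F k z) \<le> norm z" if "norm z \<le> 1" for k z
  proof -
    have "norm (F k z) = norm z ^ N k" by (simp add: F_def norm_power)
    also have "\<dots> \<le> norm z ^ 1" by (rule power_decreasing) (use N2(1)[of k] that in auto)
    finally show ?thesis by simp
  qed
  have Fin: "F k z \<in> ball 0 1" if "z \<in> ball 0 1" for k z
    using Fle[of z k] that by auto
  have contF: "continuous_on S (F k)" "continuous_on S (F1 k)" "continuous_on S (F2 k)" for k S
    unfolding F_def F1_def F2_def by (auto intro!: continuous_intros)
  have FS: "F k ` ball 0 1 \<subseteq> ball 0 1" for k using Fin by auto
  have compc: "continuous_on (ball 0 1) (\<lambda>z. u (F k z))" if "continuous_on (ball 0 1) u" for u :: "complex \<Rightarrow> real" and k
    by (rule continuous_on_compose2[OF that contF(1) FS])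
  note cc = compc[OF Cx] compc[OF Cy] compc[OF C(1)] compc[OF C(2)] compc[OF C(3)] compc[OF C(4)]
  have "harmonic_on (\<lambda>z. \<Sum>k. c k * h (F k z)) (ball 0 1)"
  proof (rule harmonic_series[where gx = "\<lambda>k. cgx (c k) (F k) (F1 k) ux uy"
        and gy = "\<lambda>k. cgy (c k) (F k) (F1 k) ux uy"
        and gxx = "\<lambda>k. cgxx (c k) (F k) (F1 k) (F2 k) ux uy uxx uxy uyx uyy"
        and gxy = "\<lambda>k. cgxy (c k) (F k) (F1 k) (F2 k) ux uy uxx uxy uyx uyy"
        and gyx = "\<lambda>k. cgyx (c k) (F k) (F1 k) (F2 k) ux uy uxx uxy uyx uyy"
        and gyy = "\<lambda>k. cgyy (c k) (F k) (F1 k) (F2 k) ux uy uxx uxy uyx uyy"])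
    fix k z assume z: "(z::complex) \<in> ball 0 1"
    show "((\<lambda>z. c k * h (F k z)) has_derivative (\<lambda>w. Re w * cgx (c k) (F k) (F1 k) ux uy z + Im w * cgy (c k) (F k) (F1 k) ux uy z)) (at z)"
      by (rule comp_d0[where f="F k" and f'="F1 k" and z=z and h=h and ux=ux and uy=uy and c="c k", OF H0[OF Fin[of z k, OF z]] dF[of k z]])
    show "(cgx (c k) (F k) (F1 k) ux uy has_derivative (\<lambda>w. Re w * cgxx (c k) (F k) (F1 k) (F2 k) ux uy uxx uxy uyx uyy z + Im w * cgxy (c k) (F k) (F1 k) (F2 k) ux uy uxx uxy uyx uyy z)) (at z)"
      by (rule comp_dxy(1)[where f="F k" and f'="F1 k" and f''="F2 k" and z=z and ux=ux and uy=uy and uxx=uxx and uxy=uxy and uyx=uyx and uyy=uyy and c="c k", OF H1[OF Fin[of z k, OF z]] H2[OF Fin[of z k, OF z]] dF[of k z] dF1[of k z]])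
    show "(cgy (c k) (F k) (F1 k) ux uy has_derivative (\<lambda>w. Re w * cgyx (c k) (F k) (F1 k) (F2 k) ux uy uxx uxy uyx uyy z + Im w * cgyy (c k) (F k) (F1 k) (F2 k) ux uy uxx uxy uyx uyy z)) (at z)"
      by (rule comp_dxy(2)[where f="F k" and f'="F1 k" and f''="F2 k" and z=z and ux=ux and uy=uy and uxx=uxx and uxy=uxy and uyx=uyx and uyy=uyy and c="c k", OF H1[OF Fin[of z k, OF z]] H2[OF Fin[of z k, OF z]] dF[of k z] dF1[of k z]])
    show "cgxx (c k) (F k) (F1 k) (F2 k) ux uy uxx uxy uyx uyy z + cgyy (c k) (F k) (F1 k) (F2 k) ux uy uxx uxy uyx uyy z = 0"
      by (rule comp_lap[where f="F k" and z=z and uxx=uxx and uyy=uyy, OF L[OF Fin[of z k, OF z]]])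
  next
    fix k
    show "continuous_on (ball 0 1) (cgxx (c k) (F k) (F1 k) (F2 k) ux uy uxx uxy uyx uyy)"
      unfolding cgxx_def[abs_def] by (intro continuous_intros cc contF)
    show "continuous_on (ball 0 1) (cgxy (c k) (F k) (F1 k) (F2 k) ux uy uxx uxy uyx uyy)"
      unfolding cgxy_def[abs_def] by (intro continuous_intros cc contF)
    show "continuous_on (ball 0 1) (cgyx (c k) (F k) (F1 k) (F2 k) ux uy uxx uxy uyx uyy)"
      unfolding cgyx_def[abs_def] by (intro continuous_intros cc contF)
    show "continuous_on (ball 0 1) (cgyy (c k) (F k) (F1 k) (F2 k) ux uy uxx uxy uyx uyy)"
      unfolding cgyy_def[abs_def] by (intro continuous_intros cc contF)
  next
    fix \<rho> :: real assume r: "0 < \<rho>" "\<rho> < 1"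
    obtain M1 where M1: "M1 \<ge> 0" "\<forall>w\<in>cball 0 \<rho>. \<bar>ux w\<bar> \<le> M1" using cont_bound_cball[OF Cx r] by blast
    obtain M2 where M2: "M2 \<ge> 0" "\<forall>w\<in>cball 0 \<rho>. \<bar>uy w\<bar> \<le> M2" using cont_bound_cball[OF Cy r] by blast
    obtain M3 where M3: "M3 \<ge> 0" "\<forall>w\<in>cball 0 \<rho>. \<bar>uxx w\<bar> \<le> M3" using cont_bound_cball[OF C(1) r] by blast
    obtain M4 where M4: "M4 \<ge> 0" "\<forall>w\<in>cball 0 \<rho>. \<bar>uxy w\<bar> \<le> M4" using cont_bound_cball[OF C(2) r] by blast
    obtain M5 where M5: "M5 \<ge> 0" "\<forall>w\<in>cball 0 \<rho>. \<bar>uyx w\<bar> \<le> M5" using cont_bound_cball[OF C(3) r] by blast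
    obtain M6 where M6: "M6 \<ge> 0" "\<forall>w\<in>cball 0 \<rho>. \<bar>uyy w\<bar> \<le> M6" using cont_bound_cball[OF C(4) r] by blast
    define Mh where "Mh = M1 + M2 + M3 + M4 + M5 + M6 + B"
    have Mh0: "0 \<le> Mh" using M1 M2 M3 M4 M5 M6 B by (simp add: Mh_def)
    define q where "q k = real (N k) ^ 2 * \<rho> ^ (N k - 2)" for k
    define p where "p k = real (N k) * \<rho> ^ (N k - 2)" for k
    define W where "W k = c k * (6 * q k * Mh)" for k
    have pq: "p k * p k \<le> q k" "p k \<le> q k" for k
    proof -
      have "\<rho> ^ (N k - 2) * \<rho> ^ (N k - 2) \<le> \<rho> ^ (N k - 2)"
        using r by (intro mult_left_le) (auto intro: power_le_one)
      then show "p k * p k \<le> q k" unfolding p_def q_def using r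
        by (simp add: power2_eq_square algebra_simps mult_left_mono)
      have "real (N k) \<le> real (N k) ^ 2" using N2(1)[of k] by (simp add: power2_eq_square)
      then show "p k \<le> q k" unfolding p_def q_def using r by (intro mult_right_mono) auto
    qed
    have bnds: "\<bar>c k * h (F k z)\<bar> \<le> W k \<and> \<bar>cgx (c k) (F k) (F1 k) ux uy z\<bar> \<le> W k \<and>
        \<bar>cgy (c k) (F k) (F1 k) ux uy z\<bar> \<le> W k \<and>
        \<bar>cgxx (c k) (F k) (F1 k) (F2 k) ux uy uxx uxy uyx uyy z\<bar> \<le> W k \<and>
        \<bar>cgxy (c k) (F k) (F1 k) (F2 k) ux uy uxx uxy uyx uyy z\<bar> \<le> W k \<and>
        \<bar>cgyx (c k) (F k) (F1 k) (F2 k) ux uy uxx uxy uyx uyy z\<bar> \<le> W k \<and>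
        \<bar>cgyy (c k) (F k) (F1 k) (F2 k) ux uy uxx uxy uyx uyy z\<bar> \<le> W k"
      if z: "z \<in> ball 0 \<rho>" for k z
    proof -
      have nz: "norm z \<le> \<rho>" using z by auto
      have Fz: "F k z \<in> cball 0 \<rho>" using Fle[of z k] nz r by auto
      have pw: "norm z ^ m \<le> \<rho> ^ (N k - 2)" if "N k - 2 \<le> m" for m
      proof -
        have "norm z ^ m \<le> \<rho> ^ m" by (rule power_mono[OF nz]) auto
        also have "\<dots> \<le> \<rho> ^ (N k - 2)" by (rule power_decreasing[OF that]) (use r in auto)
        finally show ?thesis .
      qed
      have f1: "cmod (F1 k z) \<le> p k"
        unfolding F1_def p_def norm_mult norm_power norm_of_nat
        by (rule mult_left_mono[OF pw]) auto
      have f2: "cmod (F2 k z) \<le> q k"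
      proof -
        have "cmod (F2 k z) = real (N k) * (real (N k - 1) * norm z ^ (N k - 1 - 1))"
          unfolding F2_def norm_mult norm_power norm_of_nat by simp
        also have "\<dots> \<le> real (N k) * (real (N k) * \<rho> ^ (N k - 2))"
          by (intro mult_left_mono mult_mono pw) auto
        finally show ?thesis by (simp add: q_def power2_eq_square)
      qed
      have u: "\<bar>ux (F k z)\<bar> \<le> Mh" "\<bar>uy (F k z)\<bar> \<le> Mh" "\<bar>uxx (F k z)\<bar> \<le> Mh" "\<bar>uxy (F k z)\<bar> \<le> Mh" "\<bar>uyx (F k z)\<bar> \<le> Mh" "\<bar>uyy (F k z)\<bar> \<le> Mh"
        using M1 M2 M3 M4 M5 M6 B Fz unfolding Mh_def by (smt (verit) mem_cball_0)+
      note cb = cg2_bounds[where f="F k" and f'="F1 k" and f''="F2 k" and z=z and ux=ux and uy=uy and uxx=uxx and uxy=uxy and uyx=uyx and uyy=uyy and c="c k", OF c0 f1 f2 pq Mh0 u]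
      have hz: "\<bar>h (F k z)\<bar> \<le> B * q k"
      proof -
        have z1: "z \<in> ball 0 1" using z r by auto
        have "\<bar>h (F k z)\<bar> \<le> B * norm (F k z)" using hb Fin[OF z1] by blast
        also have "norm (F k z) \<le> q k"
        proof -
          have "norm (F k z) = norm z ^ N k" by (simp add: F_def norm_power)
          also have "\<dots> \<le> \<rho> ^ (N k - 2)" by (rule pw) simp
          also have "\<dots> \<le> q k"
          proof -
            have "(1::real) \<le> real (N k)" using N2(1)[of k] by simp
            then have one: "1 \<le> real (N k) ^ 2" by (metis one_le_power)
            show ?thesis unfolding q_def using one r by (subst mult_le_cancel_right1) auto
          qed
          finally show ?thesis .
        qed
        then have "B * norm (F k z) \<le> B * q k" using B by simp
        finally show ?thesis .
      qed
      have q0: "0 \<le> q k" by (simp add: q_def r less_imp_le)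
      have "\<bar>c k * h (F k z)\<bar> \<le> W k"
      proof -
        have "\<bar>c k * h (F k z)\<bar> = c k * \<bar>h (F k z)\<bar>" using c0 by (simp add: abs_mult)
        also have "\<dots> \<le> c k * (B * q k)" by (rule mult_left_mono[OF hz c0])
        also have "\<dots> \<le> W k" unfolding W_def Mh_def using c0 q0 M1 M2 M3 M4 M5 M6 B
          by (intro mult_left_mono) (auto simp: algebra_simps intro!: mult_left_mono)
        finally show ?thesis .
      qed
      then show ?thesis using cb unfolding W_def by auto
    qed
    obtain C where C: "\<forall>n. real n ^ 3 * \<rho> ^ n \<le> C * sqrt \<rho> ^ n" using poly_geom_bound[OF r] by blast
    have C0: "0 \<le> C" using C[rule_format, of 0] by simp
    have q0: "0 \<le> q k" for k by (simp add: q_def r less_imp_le)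
    have W0: "0 \<le> W k" for k unfolding W_def using c0 q0 Mh0 by simp
    have Wle: "W k \<le> (6 * Mh * C / \<rho>^2) * sqrt \<rho> ^ k" for k
    proof -
      have e: "\<rho> ^ N k = \<rho> ^ (N k - 2) * \<rho>^2"
      proof -
        have "N k = (N k - 2) + 2" using N2(1)[of k] by simp
        then show ?thesis by (metis power_add)
      qed
      have "W k \<le> real (N k) * (6 * q k * Mh)" unfolding W_def
        by (rule mult_right_mono[OF N2(3)]) (use q0 Mh0 in simp)
      also have "\<dots> = 6 * Mh * (real (N k) ^ 3 * \<rho> ^ N k) / \<rho>^2"
        unfolding e q_def using r by (simp add: power2_eq_square power3_eq_cube field_simps)
      also have "\<dots> \<le> 6 * Mh * (C * sqrt \<rho> ^ N k) / \<rho>^2"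
        using C Mh0 r by (intro divide_right_mono mult_left_mono) auto
      also have "\<dots> \<le> 6 * Mh * (C * sqrt \<rho> ^ k) / \<rho>^2"
        using C0 Mh0 r N2(2)[of k] by (intro divide_right_mono mult_left_mono power_decreasing) auto
      finally show ?thesis by simp
    qed
    have sW: "summable W"
    proof (rule summable_comparison_test[where g="\<lambda>k. (6 * Mh * C / \<rho>^2) * sqrt \<rho> ^ k"])
      show "\<exists>N. \<forall>n\<ge>N. norm (W n) \<le> 6 * Mh * C / \<rho>\<^sup>2 * sqrt \<rho> ^ n" using Wle W0 by auto
      show "summable (\<lambda>k. 6 * Mh * C / \<rho>\<^sup>2 * sqrt \<rho> ^ k)" using r
        by (intro summable_mult summable_geometric) auto
    qed
    show "\<exists>M. summable M \<and> (\<forall>k. \<forall>z\<in>ball 0 \<rho>.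
        \<bar>c k * h (F k z)\<bar> \<le> M k \<and> \<bar>cgx (c k) (F k) (F1 k) ux uy z\<bar> \<le> M k \<and>
        \<bar>cgy (c k) (F k) (F1 k) ux uy z\<bar> \<le> M k \<and>
        \<bar>cgxx (c k) (F k) (F1 k) (F2 k) ux uy uxx uxy uyx uyy z\<bar> \<le> M k \<and>
        \<bar>cgxy (c k) (F k) (F1 k) (F2 k) ux uy uxx uxy uyx uyy z\<bar> \<le> M k \<and>
        \<bar>cgyx (c k) (F k) (F1 k) (F2 k) ux uy uxx uxy uyx uyy z\<bar> \<le> M k \<and>
        \<bar>cgyy (c k) (F k) (F1 k) (F2 k) ux uy uxx uxy uyx uyy z\<bar> \<le> M k)"
      using sW bnds by blast
  qed
  then show ?thesis by (simp add: c_def F_def N_def)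
qed




lemma pow_le_inv:
  fixes r :: real assumes r: "0 \<le> r" "r < 1" and N: "N \<ge> 1"
  shows "r ^ N \<le> 1 / (real N * (1 - r))"
proof -
  have "real N * r ^ N = (\<Sum>i<N. r ^ N)" by simp
  also have "\<dots> \<le> (\<Sum>i<N. r ^ i)" by (intro sum_mono power_decreasing) (use r in auto)
  finally have a: "real N * r ^ N \<le> (\<Sum>i<N. r ^ i)" .
  have "(1 - r) * (\<Sum>i<N. r ^ i) = 1 - r ^ N"
    using r by (simp add: sum_gp_strict)
  also have "\<dots> \<le> 1" using r by simp
  finally have b: "(1 - r) * (\<Sum>i<N. r ^ i) \<le> 1" .
  have "(1 - r) * (real N * r ^ N) \<le> 1"
    using mult_left_mono[OF a, of "1 - r"] b r by linarith
  then show ?thesis using r N by (simp add: field_simps)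
qed

lemma two_A_le: "4 \<le> A \<Longrightarrow> 2 * A \<le> (2::nat) ^ (A - 1)"
proof (induction A rule: dec_induct)
  case base then show ?case by simp
next
  case (step n)
  have "2 * Suc n \<le> 2 * (2 * n)" using step by simp
  also have "\<dots> \<le> 2 * 2 ^ (n - 1)" using step by simp
  also have "\<dots> = 2 ^ (Suc n - 1)" using step by (cases n) auto
  finally show ?case .
qed

lemma ratio_step:
  fixes A :: nat assumes A: "4 \<le> A"
  shows "real A ^ Suc k / real ((2::nat) ^ (A ^ Suc k)) \<le> (1/2) * (real A ^ k / real ((2::nat) ^ (A ^ k)))"
proof -
  have e: "A ^ Suc k = A ^ k + (A - 1) * A ^ k" using A by (simp add: algebra_simps)
  have "A - 1 \<le> (A - 1) * A ^ k" using A by simp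
  then have "(2::nat) ^ (A - 1) \<le> 2 ^ ((A - 1) * A ^ k)" by (rule power_increasing) simp
  with two_A_le[OF A] have "2 * A \<le> (2::nat) ^ ((A - 1) * A ^ k)" by linarith
  then have "2 * A * 2 ^ (A ^ k) \<le> (2::nat) ^ (A ^ Suc k)"
    unfolding e power_add by simp
  then have key: "real (2 * A * 2 ^ (A ^ k)) \<le> real ((2::nat) ^ (A ^ Suc k))" by (simp only: of_nat_le_iff)
  have p1: "0 < real ((2::nat) ^ (A ^ Suc k))" "0 < real ((2::nat) ^ (A ^ k))" by simp_all
  show ?thesis using key p1 A
    by (simp add: field_simps)
qed

lemma geom_sum_le:
  fixes A :: nat assumes A: "2 \<le> A"
  shows "(\<Sum>k<Suc n. real A ^ k) \<le> 2 * real A ^ n"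
proof (induction n)
  case 0 then show ?case by simp
next
  case (Suc n)
  have "(\<Sum>k<Suc (Suc n). real A ^ k) = (\<Sum>k<Suc n. real A ^ k) + real A ^ Suc n" by simp
  also have "\<dots> \<le> 2 * real A ^ n + real A ^ Suc n" using Suc by simp
  also have "2 * real A ^ n \<le> real A ^ Suc n"
    using A by (simp add: mult_right_mono)
  finally show ?case by simp
qed

lemma lacunary:
  fixes A :: nat and r :: real
  assumes A: "4 \<le> A" and r: "0 \<le> r" "r < 1"
  shows "summable (\<lambda>k. real A ^ k * r ^ (2 ^ (A ^ k)))"
    and "(\<Sum>k. real A ^ k * r ^ (2 ^ (A ^ k))) \<le> (4 + 4 * real A) * (1 + ln (1 / (1 - r)))"
proof -
  define N where "N k = (2::nat) ^ (A ^ k)" for k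
  define T where "T = 1 / (1 - r)"
  define L where "L = ln T"
  define f where "f k = real A ^ k * r ^ N k" for k
  have T1: "1 \<le> T" using r by (simp add: T_def)
  have L0: "0 \<le> L" using T1 by (simp add: L_def)
  have N1: "1 \<le> N k" for k by (simp add: N_def)
  have f0: "0 \<le> f k" for k using r by (simp add: f_def)
  have fT: "f k \<le> real A ^ k * T / real (N k)" for k
  proof -
    have "r ^ N k \<le> 1 / (real (N k) * (1 - r))" by (rule pow_le_inv[OF r N1])
    also have "\<dots> = T / real (N k)" by (simp add: T_def)
    finally have "real A ^ k * r ^ N k \<le> real A ^ k * (T / real (N k))" by (intro mult_left_mono) auto
    then show ?thesis unfolding f_def by simp
  qed
  have f1: "f k \<le> real A ^ k" for k
    unfolding f_def using r by (simp add: mult_left_le power_le_one)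
  have "\<exists>n. T < 2 ^ n" by (rule real_arch_pow) simp
  then obtain n where n: "T < 2 ^ n" by blast
  have "n \<le> A ^ n"
  proof -
    have "n < 2 ^ n" by (rule less_exp)
    also have "(2::nat) ^ n \<le> A ^ n" using A by (intro power_mono) auto
    finally show ?thesis by simp
  qed
  then have p: "(2::real) ^ n \<le> 2 ^ (A ^ n)" by (rule power_increasing) simp
  have "real (N n) = (2::real) ^ (A ^ n)" by (simp add: N_def)
  then have "T \<le> real (N n)" using n p by linarith
  then have ex: "\<exists>k. T \<le> real (N k)" by blast
  define k0 where "k0 = (LEAST k. T \<le> real (N k))"
  have hk0: "T \<le> real (N k0)" unfolding k0_def by (rule LeastI_ex[OF ex])
  have hlt: "real (N k) < T" if "k < k0" for k
    using not_less_Least[OF that[unfolded k0_def]] by simp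
  define a where "a k = real A ^ k / real (N k)" for k
  have adec: "a (j + k0) \<le> (1/2) ^ j * a k0" for j
  proof (induction j)
    case 0 then show ?case by simp
  next
    case (Suc j)
    have "a (Suc j + k0) \<le> (1/2) * a (j + k0)"
      unfolding a_def N_def using ratio_step[OF A, of "j + k0"] by simp
    also have "\<dots> \<le> (1/2) * ((1/2) ^ j * a k0)" using Suc by simp
    finally show ?case by simp
  qed
  have a0: "0 \<le> a k" for k by (simp add: a_def)
  have decay: "f (j + k0) \<le> (1/2) ^ j * real A ^ k0" for j
  proof -
    have "f (j + k0) \<le> a (j + k0) * T" using fT[of "j + k0"] by (simp add: a_def)
    also have "\<dots> \<le> (1/2) ^ j * a k0 * T" using adec[of j] T1 by (intro mult_right_mono) auto
    also have "a k0 * T \<le> real A ^ k0"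
    proof -
      have "a k0 * T = real A ^ k0 * (T / real (N k0))" by (simp add: a_def)
      also have "\<dots> \<le> real A ^ k0 * 1" using hk0 N1[of k0] by (intro mult_left_mono) auto
      finally show ?thesis by simp
    qed
    then have "(1/2) ^ j * a k0 * T \<le> (1/2) ^ j * real A ^ k0"
      by (simp add: mult.assoc mult_left_mono)
    finally show ?thesis .
  qed
  have sg: "summable (\<lambda>j. (1/2::real) ^ j * real A ^ k0)" by (intro summable_mult2 summable_geometric) simp
  have st: "summable (\<lambda>j. f (j + k0))"
    by (rule summable_comparison_test[OF _ sg]) (use decay f0 in auto)
  then have sf: "summable f" by (rule summable_iff_shift[THEN iffD1])
  have feq: "f = (\<lambda>k. real A ^ k * r ^ (2 ^ (A ^ k)))" by (auto simp: f_def N_def)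
  show "summable (\<lambda>k. real A ^ k * r ^ (2 ^ (A ^ k)))" using sf feq by simp
  have split: "suminf f = (\<Sum>j. f (j + k0)) + (\<Sum>i<k0. f i)" by (rule suminf_split_initial_segment[OF sf])
  have tail: "(\<Sum>j. f (j + k0)) \<le> 2 * real A ^ k0"
  proof -
    have "(\<Sum>j. f (j + k0)) \<le> (\<Sum>j. (1/2::real) ^ j * real A ^ k0)" by (rule suminf_le[OF decay st sg])
    also have "\<dots> = (\<Sum>j. (1/2::real) ^ j) * real A ^ k0" by (rule suminf_mult2[symmetric]) simp
    also have "(\<Sum>j. (1/2::real) ^ j) = 2" using suminf_geometric[of "1/2::real"] by simp
    finally show ?thesis by simp
  qed
  have head: "(\<Sum>i<k0. f i) \<le> (\<Sum>i<k0. real A ^ i)" by (intro sum_mono f1)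
  have "suminf f \<le> (4 + 4 * real A) * (1 + L)"
  proof (cases k0)
    case 0
    then have "suminf f \<le> 2" using split tail by simp
    also have "2 \<le> (4 + 4 * real A) * (1 + L)"
    proof -
      have "4 * 1 \<le> (4 + 4 * real A) * (1 + L)" by (rule mult_mono) (use L0 in auto)
      then show ?thesis by simp
    qed
    finally show ?thesis .
  next
    case (Suc m)
    have "real (N m) < T" using hlt Suc by simp
    then have "ln (real (N m)) < L" unfolding L_def using N1[of m] by (subst ln_less_cancel_iff) auto
    moreover have "ln (real (N m)) = real (A ^ m) * ln 2" by (simp add: N_def ln_realpow)
    ultimately have "real (A ^ m) * ln 2 < L" by simp
    moreover have "real (A ^ m) * (2/3) \<le> real (A ^ m) * ln 2" using ln2_ge_two_thirds by (intro mult_left_mono) auto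
    ultimately have Am: "real A ^ m \<le> 2 * L" using L0 by (simp only: of_nat_power; linarith)
    have "(\<Sum>i<k0. real A ^ i) \<le> 2 * real A ^ m" unfolding Suc by (rule geom_sum_le) (use A in simp)
    moreover have "2 * real A ^ k0 = 2 * real A * real A ^ m" by (simp add: Suc)
    moreover have "real A * real A ^ m \<le> real A * (2 * L)" using Am by (intro mult_left_mono) auto
    ultimately have "suminf f \<le> 4 * L + 4 * real A * L" using split tail head Am by linarith
    also have "\<dots> \<le> (4 + 4 * real A) * (1 + L)" using L0 by (simp add: algebra_simps)
    finally show ?thesis .
  qed
  then show "(\<Sum>k. real A ^ k * r ^ (2 ^ (A ^ k))) \<le> (4 + 4 * real A) * (1 + ln (1 / (1 - r)))"
    using feq by (simp add: L_def T_def)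
qed




lemma Limsup_ge_at_left:
  fixes f :: "real \<Rightarrow> ereal"
  assumes "\<And>\<delta>. \<delta> > 0 \<Longrightarrow> \<exists>r. 1 - \<delta> < r \<and> r < 1 \<and> c \<le> f r"
  shows "c \<le> Limsup (at_left 1) f"
  unfolding Limsup_def
proof (rule INF_greatest)
  fix P assume "P \<in> {P. eventually P (at_left (1::real))}"
  then obtain b where b: "b < 1" "\<And>y. b < y \<Longrightarrow> y < 1 \<Longrightarrow> P y"
    using eventually_at_left[of 0 1 P] by auto
  obtain r where r: "1 - (1 - b) < r" "r < 1" "c \<le> f r" using assms[of "1 - b"] b by auto
  have "P r" using b r by auto
  then have "f r \<le> (SUP x\<in>{x. P x}. f x)" by (intro SUP_upper) auto
  then show "c \<le> (SUP x\<in>{x. P x}. f x)" using r(3) by simp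
qed

lemma sq_le_pow2: "n ^ 2 \<le> 4 * (2::nat) ^ n"
proof (induction n rule: less_induct)
  case (less n)
  show ?case
  proof (cases "n \<le> 3")
    case True
    then have "n = 0 \<or> n = 1 \<or> n = 2 \<or> n = 3" by auto
    then show ?thesis by auto
  next
    case False
    then obtain m where m: "n = Suc m" "m \<ge> 3" by (cases n) auto
    have "n ^ 2 = m^2 + 2*m + 1" using m by (simp add: power2_eq_square)
    also have "\<dots> \<le> 2 * m^2"
    proof -
      have "3 * m \<le> m * m" using m(2) by (rule mult_right_mono) simp
      then show ?thesis using m(2) unfolding power2_eq_square by linarith
    qed
    also have "\<dots> \<le> 2 * (4 * 2 ^ m)" using less[of m] m by simp
    also have "\<dots> = 4 * 2 ^ n" using m by simp
    finally show ?thesis .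
  qed
qed

lemma exp3: "exp (3::real) > 6"
proof -
  have "2 \<le> exp (1::real)" using exp_ge_add_one_self[of 1] by simp
  then have "2 ^ 3 \<le> exp (1::real) ^ 3" by (rule power_mono) simp
  also have "exp (1::real) ^ 3 = exp 3" by (simp add: exp_of_nat_mult[symmetric])
  finally show ?thesis by simp
qed

lemma key_point:
  fixes h :: "complex \<Rightarrow> real" and B :: real and A K :: nat and \<theta> :: real
  assumes hb: "\<forall>z\<in>ball 0 1. \<bar>h z\<bar> \<le> B * norm z" and B: "B > 0"
    and sup: "\<forall>\<theta>\<in>{0..<2*pi}. (SUP r\<in>{1/6<..<1/3::real}. h (complex_of_real r * cis \<theta>)) \<ge> 1"
    and A: "4 \<le> A" "36 * B \<le> real A - 1"
  shows "\<exists>r. 1 - 3 / real ((2::nat) ^ (A ^ K)) < r \<and> r < 1 \<and>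
      1/8 \<le> (\<Sum>k. real A ^ k * h ((complex_of_real r * cis \<theta>) ^ (2 ^ (A ^ k)))) / \<bar>ln (1 - r)\<bar>"
proof -
  define N where "N = (2::nat) ^ (A ^ K)"
  have N2: "2 \<le> N"
  proof -
    have "2 ^ 1 \<le> (2::nat) ^ (A ^ K)" by (rule power_increasing) (use A in auto)
    then show ?thesis by (simp add: N_def)
  qed
  define m0 where "m0 = \<lfloor>real N * \<theta> / (2 * pi)\<rfloor>"
  define \<phi> where "\<phi> = real N * \<theta> - 2 * pi * of_int m0"
  have phi: "\<phi> \<in> {0..<2*pi}"
  proof -
    have a: "of_int m0 \<le> real N * \<theta> / (2 * pi)" "real N * \<theta> / (2 * pi) < of_int m0 + 1"
      unfolding m0_def by linarith+
    have "2 * pi * of_int m0 \<le> real N * \<theta>" using a(1) pi_gt_zero by (simp add: field_simps)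
    moreover have "real N * \<theta> < 2 * pi * of_int m0 + 2 * pi" using a(2) pi_gt_zero by (simp add: field_simps)
    ultimately show ?thesis by (simp add: \<phi>_def)
  qed
  have cphi: "cis \<phi> = cis (real N * \<theta>)"
  proof -
    have "cis \<phi> = cis (real N * \<theta>) / cis (2 * pi * of_int m0)" unfolding \<phi>_def by (rule cis_divide[symmetric])
    also have "cis (2 * pi * of_int m0) = 1" by (rule cis_multiple_2pi) simp
    finally show ?thesis by simp
  qed
  have hbd: "\<bar>h (complex_of_real s * cis \<phi>)\<bar> \<le> B" if "s \<in> {1/6<..<1/3::real}" for s
  proof -
    have "norm (complex_of_real s * cis \<phi>) = s" using that by (simp add: norm_mult)
    then have "complex_of_real s * cis \<phi> \<in> ball 0 1" "norm (complex_of_real s * cis \<phi>) \<le> 1" using that by auto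
    then show ?thesis using hb B by (smt (verit, best) mult_left_le)
  qed
  have bdd: "bdd_above ((\<lambda>s. h (complex_of_real s * cis \<phi>)) ` {1/6<..<1/3::real})"
    by (rule bdd_aboveI2[of _ _ B]) (use hbd in \<open>force simp: abs_le_iff\<close>)
  have hs: "1/2 < (SUP s\<in>{1/6<..<1/3::real}. h (complex_of_real s * cis \<phi>))"
    using sup phi by fastforce
  have ne: "{1/6<..<1/3::real} \<noteq> {}" by auto
  have "\<exists>s\<in>{1/6<..<1/3::real}. 1/2 < h (complex_of_real s * cis \<phi>)"
    using less_cSUP_iff[OF ne bdd, of "1/2"] hs by blast
  then obtain s where s: "s \<in> {1/6<..<1/3::real}" "1/2 < h (complex_of_real s * cis \<phi>)"
    by blast
  define r where "r = root N s"
  have Npos: "0 < N" using N2 by simp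
  have rN: "r ^ N = s" using s Npos by (simp add: r_def)
  have r0: "0 < r" using s Npos by (simp add: r_def real_root_gt_zero)
  have r1: "r < 1" using s Npos by (simp add: r_def)
  define z where "z = complex_of_real r * cis \<theta>"
  have nz: "norm z = r" using r0 by (simp add: z_def norm_mult)
  have zN: "z ^ N = complex_of_real s * cis \<phi>"
    by (simp add: z_def power_mult_distrib Complex.DeMoivre cphi rN[symmetric])
  define t where "t k = real A ^ k * h (z ^ (2 ^ (A ^ k)))" for k
  have tb: "\<bar>t k\<bar> \<le> B * (real A ^ k * r ^ (2 ^ (A ^ k)))" for k
  proof -
    have "norm (z ^ (2 ^ (A ^ k))) = r ^ (2 ^ (A ^ k))" by (simp add: norm_power nz)
    moreover have "r ^ (2 ^ (A ^ k)) < 1" using r0 r1 by (simp add: power_less_one_iff)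
    ultimately have "\<bar>h (z ^ (2 ^ (A ^ k)))\<bar> \<le> B * r ^ (2 ^ (A ^ k))" using hb[rule_format, of "z ^ (2 ^ (A ^ k))"] by simp
    then have "real A ^ k * \<bar>h (z ^ (2 ^ (A ^ k)))\<bar> \<le> real A ^ k * (B * r ^ (2 ^ (A ^ k)))"
      by (intro mult_left_mono) auto
    then show ?thesis unfolding t_def abs_mult by (simp add: mult.left_commute)
  qed
  have st: "summable t"
  proof (rule summable_comparison_test[OF _ summable_mult[OF lacunary(1)[OF A(1), of r]]])
    show "\<exists>N. \<forall>n\<ge>N. norm (t n) \<le> B * (real A ^ n * r ^ 2 ^ A ^ n)" using tb by auto
  qed (use r0 r1 in auto)
  have A1: "1 < real A" using A by simp
  have rk1: "r ^ n \<le> 1" for n using r0 r1 by (simp add: power_le_one)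
  have headb: "- (B * real A ^ K / (real A - 1)) \<le> (\<Sum>k<K. t k)"
  proof -
    have "(\<Sum>k<K. - (B * real A ^ k)) \<le> (\<Sum>k<K. t k)"
    proof (rule sum_mono)
      fix k
      have "B * (real A ^ k * r ^ (2 ^ (A ^ k))) \<le> B * (real A ^ k * 1)"
        using B rk1 by (intro mult_left_mono) auto
      then show "- (B * real A ^ k) \<le> t k" using tb[of k] by linarith
    qed
    moreover have "(\<Sum>k<K. - (B * real A ^ k)) = - B * ((real A ^ K - 1) / (real A - 1))"
    proof -
      have "(\<Sum>k<K. real A ^ k) = (1 - real A ^ K) / (1 - real A)" using A1 by (simp add: sum_gp_strict)
      also have "\<dots> = (real A ^ K - 1) / (real A - 1)" by (metis minus_diff_eq minus_divide_divide)
      finally show ?thesis by (simp add: sum_negf sum_distrib_left[symmetric])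
    qed
    moreover have "B * ((real A ^ K - 1) / (real A - 1)) \<le> B * (real A ^ K / (real A - 1))"
      using B A1 by (intro mult_left_mono divide_right_mono) auto
    ultimately show ?thesis by simp
  qed
  have tK: "real A ^ K / 2 < t K"
  proof -
    have "t K = real A ^ K * h (complex_of_real s * cis \<phi>)" by (simp add: t_def zN[symmetric] N_def)
    moreover have "real A ^ K * (1/2) < real A ^ K * h (complex_of_real s * cis \<phi>)"
      using s(2) A1 by (intro mult_strict_left_mono) auto
    ultimately show ?thesis by simp
  qed
  have tailb: "\<bar>t (j + Suc K)\<bar> \<le> 8 * B * real A ^ K / real A * (1 / real A) ^ j" for j
  proof -
    define k where "k = j + Suc K"
    define m where "m = A ^ Suc j"
    define D where "D = A ^ k - A ^ K"
    have m1: "1 \<le> m" using A by (simp add: m_def)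
    have Ak: "A ^ k = A ^ K * m" by (simp add: k_def m_def power_add[symmetric] add.commute)
    have AK1: "1 \<le> A ^ K" using A by simp
    have DD: "D = A ^ K * (m - 1)" by (simp add: D_def Ak right_diff_distrib')
    have Dm: "m - 1 \<le> D" unfolding DD using AK1 by simp
    have Ale: "A ^ K \<le> A ^ k" unfolding Ak using m1 by simp
    have e2: "(2::nat) ^ (A ^ k) = N * 2 ^ D"
      unfolding N_def D_def power_add[symmetric] using Ale by simp
    have "r ^ (2 ^ (A ^ k)) = s ^ (2 ^ D)" unfolding e2 power_mult rN ..
    also have "\<dots> \<le> (1/2) ^ (2 ^ D)" using s(1) by (intro power_mono) auto
    also have "\<dots> \<le> (1/2) ^ D" by (rule power_decreasing) (use less_exp[of D] in auto)
    also have "\<dots> \<le> (1/2) ^ (m - 1)" by (rule power_decreasing[OF Dm]) auto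
    finally have rk: "r ^ (2 ^ (A ^ k)) \<le> (1/2) ^ (m - 1)" .
    have mm: "real m * (1/2) ^ (m - 1) \<le> 8 / real m"
    proof -
      have "real (m ^ 2) \<le> real (4 * 2 ^ m)" using sq_le_pow2[of m] by (simp only: of_nat_le_iff)
      then have sq: "real m * real m \<le> 4 * 2 ^ m" by (simp add: power2_eq_square)
      have p: "(1/2::real) ^ (m - 1) = 2 / 2 ^ m"
      proof -
        have "(2::real) ^ m = 2 * 2 ^ (m - 1)" using m1 by (metis Suc_diff_1 less_le_trans power_Suc zero_less_one)
        then show ?thesis by (simp add: power_one_over)
      qed
      show ?thesis unfolding p using sq m1 by (simp add: field_simps)
    qed
    have "\<bar>t k\<bar> \<le> B * (real A ^ k * r ^ (2 ^ (A ^ k)))" by (rule tb)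
    also have "\<dots> \<le> B * (real A ^ K * (real m * (1/2) ^ (m - 1)))"
    proof -
      have RAk: "real A ^ k = real A ^ K * real m" by (metis Ak of_nat_mult of_nat_power)
      have "real A ^ k * r ^ (2 ^ (A ^ k)) \<le> real A ^ K * (real m * (1/2) ^ (m - 1))"
        unfolding RAk mult.assoc by (intro mult_left_mono rk) auto
      then show ?thesis using B by (intro mult_left_mono) auto
    qed
    also have "\<dots> \<le> B * (real A ^ K * (8 / real m))"
      using B mm by (intro mult_left_mono) auto
    also have "\<dots> = 8 * B * real A ^ K / real A * (1 / real A) ^ j"
      using A1 by (simp add: m_def field_simps power_one_over)
    finally show ?thesis by (simp add: k_def)
  qed
  have sg: "summable (\<lambda>j. 8 * B * real A ^ K / real A * (1 / real A) ^ j)"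
    using A1 by (intro summable_mult summable_geometric) auto
  have st2: "summable (\<lambda>j. t (j + Suc K))" using st by (rule summable_iff_shift[THEN iffD2])
  have tailsum: "- (8 * B * real A ^ K / (real A - 1)) \<le> (\<Sum>j. t (j + Suc K))"
  proof -
    have "(\<Sum>j. - (8 * B * real A ^ K / real A * (1 / real A) ^ j)) \<le> (\<Sum>j. t (j + Suc K))"
    proof (rule suminf_le)
      fix j show "- (8 * B * real A ^ K / real A * (1 / real A) ^ j) \<le> t (j + Suc K)"
        using tailb[of j] unfolding abs_le_iff by linarith
    qed (use st2 summable_minus[OF sg] in auto)
    moreover have "(\<Sum>j. - (8 * B * real A ^ K / real A * (1 / real A) ^ j)) = - (8 * B * real A ^ K / (real A - 1))"
    proof -
      have "(\<Sum>j. (1 / real A) ^ j) = 1 / (1 - 1 / real A)" using A1 by (intro suminf_geometric) auto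
      also have "\<dots> = real A / (real A - 1)" using A1 by (simp add: field_simps)
      finally have g: "(\<Sum>j. (1 / real A) ^ j) = real A / (real A - 1)" .
      define c where "c = 8 * B * real A ^ K / real A"
      have "(\<Sum>j. c * (1 / real A) ^ j) = c * (\<Sum>j. (1 / real A) ^ j)"
        using A1 by (intro suminf_mult) auto
      also have "\<dots> = c * (real A / (real A - 1))" unfolding g ..
      also have "\<dots> = 8 * B * real A ^ K / (real A - 1)" using A1 by (simp add: c_def field_simps)
      finally have "(\<Sum>j. c * (1 / real A) ^ j) = 8 * B * real A ^ K / (real A - 1)" .
      moreover have "(\<Sum>j. - (c * (1 / real A) ^ j)) = - (\<Sum>j. c * (1 / real A) ^ j)"
        by (rule suminf_minus[OF sg[folded c_def]])
      ultimately show ?thesis by (simp add: c_def)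
    qed
    ultimately show ?thesis by simp
  qed
  have u_eq: "(\<Sum>k. t k) = (\<Sum>j. t (j + Suc K)) + ((\<Sum>k<K. t k) + t K)"
    using suminf_split_initial_segment[OF st, of "Suc K"] by simp
  have ulow: "real A ^ K / 4 \<le> (\<Sum>k. t k)"
  proof -
    have e9: "9 * B * real A ^ K / (real A - 1) = 8 * B * real A ^ K / (real A - 1) + B * real A ^ K / (real A - 1)"
      by (simp add: add_divide_distrib[symmetric] algebra_simps)
    have "(\<Sum>k. t k) \<ge> real A ^ K / 2 - 9 * B * real A ^ K / (real A - 1)"
      using u_eq headb tK tailsum e9 by linarith
    moreover have "9 * B * real A ^ K / (real A - 1) \<le> real A ^ K / 4"
    proof -
      have "36 * B * real A ^ K \<le> (real A - 1) * real A ^ K" using A(2) by (intro mult_right_mono) auto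
      then show ?thesis using A1 by (simp add: field_simps)
    qed
    ultimately show ?thesis by linarith
  qed
  have Nr: "0 < real N" using Npos by simp
  have rlow: "1 - 3 / real N < r"
  proof (rule ccontr)
    assume "\<not> 1 - 3 / real N < r"
    then have rle: "r \<le> 1 - 3 / real N" by simp
    then have x0: "0 \<le> 1 - 3 / real N" using r0 by linarith
    have "s = r ^ N" using rN by simp
    also have "\<dots> \<le> (1 - 3 / real N) ^ N" by (rule power_mono[OF rle]) (use r0 in simp)
    also have "\<dots> \<le> exp (- (3 / real N)) ^ N"
      by (rule power_mono[OF _ x0]) (use exp_ge_add_one_self[of "- (3 / real N)"] in simp)
    also have "\<dots> = exp (- 3)" using Nr by (simp add: exp_of_nat_mult[symmetric])
    also have "\<dots> < 1/6" using exp3 by (simp add: exp_minus field_simps)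
    finally show False using s(1) by simp
  qed
  have rup: "r < 1 - 1 / (2 * real N)"
  proof -
    have "1 + real N * (- (1 / (2 * real N))) \<le> (1 + (- (1 / (2 * real N)))) ^ N"
      by (rule Bernoulli_inequality) (use N2 in \<open>simp add: field_simps\<close>)
    moreover have "1 + real N * (- (1 / (2 * real N))) = 1/2" using Nr by (simp add: field_simps)
    ultimately have "1/2 \<le> (1 - 1 / (2 * real N)) ^ N" by simp
    then have "r ^ N < (1 - 1 / (2 * real N)) ^ N" using rN s(1) by simp
    moreover have "0 \<le> 1 - 1 / (2 * real N)" using N2 by (simp add: field_simps)
    ultimately show ?thesis by (rule power_less_imp_less_base)
  qed
  have lnpos: "ln (1 - r) < 0" using r0 r1 by simp
  have lnbd: "\<bar>ln (1 - r)\<bar> \<le> 2 * real A ^ K"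
  proof -
    have "\<bar>ln (1 - r)\<bar> = - ln (1 - r)" using lnpos by simp
    also have "\<dots> = ln (1 / (1 - r))" using r1 by (simp add: ln_div)
    also have "\<dots> \<le> ln (2 * real N)"
    proof (subst ln_le_cancel_iff)
      show "0 < 1 / (1 - r)" using r1 by simp
      show "0 < 2 * real N" using Nr by simp
      have "1 / (2 * real N) < 1 - r" using rup by simp
      then show "1 / (1 - r) \<le> 2 * real N" using Nr r1 by (simp add: field_simps)
    qed
    also have "\<dots> = ln 2 + real (A ^ K) * ln 2" using Nr by (simp add: ln_mult N_def ln_realpow)
    also have "\<dots> \<le> 1 + real (A ^ K) * 1"
      using ln_le_minus_one[of 2] by (intro add_mono mult_left_mono) auto
    also have "\<dots> \<le> 2 * real A ^ K" using A by simp
    finally show ?thesis .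
  qed
  have dpos: "0 < \<bar>ln (1 - r)\<bar>" using lnpos by simp
  have "1/8 \<le> (\<Sum>k. t k) / \<bar>ln (1 - r)\<bar>"
  proof -
    have AK: "0 < real A ^ K" using A1 by simp
    have "1/8 = (real A ^ K / 4) / (2 * real A ^ K)" using AK by simp
    also have "\<dots> \<le> (\<Sum>k. t k) / (2 * real A ^ K)" using ulow AK by (intro divide_right_mono) auto
    also have "\<dots> \<le> (\<Sum>k. t k) / \<bar>ln (1 - r)\<bar>"
      using ulow AK dpos lnbd by (intro divide_left_mono) auto
    finally show ?thesis .
  qed
  then show ?thesis using rlow r1 by (intro exI[of _ r]) (simp add: t_def z_def N_def)
qed


theorem lemma11:
  fixes h :: "complex \<Rightarrow> real" and B :: real
  assumes "harmonic_on h unit_disc"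
    and "B > 0"
    and "\<forall>z\<in>unit_disc. \<bar>h z\<bar> \<le> B * norm z"
    and "\<forall>\<theta>\<in>{0..<2*pi}.
           (SUP r\<in>{1/6<..<1/3::real}. h (complex_of_real r * cis \<theta>)) \<ge> 1"
  shows "\<exists>A0::nat. \<forall>A::nat. A \<ge> A0 \<longrightarrow>
           (\<forall>z\<in>unit_disc. summable (\<lambda>k. real A ^ k * h (z ^ (2 ^ (A ^ k))))) \<and>
           class_K (\<lambda>z. \<Sum>k. real A ^ k * h (z ^ (2 ^ (A ^ k)))) \<and>
           (\<exists>d>0. \<forall>\<theta>\<in>{0..<2*pi}.
              Limsup (at_left (1::real))
                (\<lambda>r. ereal ((\<Sum>k. real A ^ k * h ((complex_of_real r * cis \<theta>) ^ (2 ^ (A ^ k))))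
                             / \<bar>ln (1 - r)\<bar>)) \<ge> ereal d)"
proof (rule exI[of _ "nat \<lceil>36 * B\<rceil> + 5"], intro allI impI conjI)
  note harm = assms(1) and B = assms(2) and hb = assms(3) and sup = assms(4)
  fix A :: nat
  assume A0: "nat \<lceil>36 * B\<rceil> + 5 \<le> A"
  have A4: "4 \<le> A" using A0 by simp
  have A36: "36 * B \<le> real A - 1"
  proof -
    have "36 * B \<le> real (nat \<lceil>36 * B\<rceil>)" by linarith
    also have "\<dots> \<le> real A - 5" using A0 by linarith
    finally show ?thesis by simp
  qed
  have tb: "\<bar>real A ^ k * h (z ^ (2 ^ (A ^ k)))\<bar> \<le> B * (real A ^ k * norm z ^ (2 ^ (A ^ k)))"
    if z: "z \<in> unit_disc" for z k
  proof -
    have "norm (z ^ (2 ^ (A ^ k))) = norm z ^ (2 ^ (A ^ k))" by (simp add: norm_power)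
    moreover have "norm z ^ (2 ^ (A ^ k)) < 1" using z by (simp add: power_less_one_iff)
    ultimately have "\<bar>h (z ^ (2 ^ (A ^ k)))\<bar> \<le> B * norm z ^ (2 ^ (A ^ k))"
      using hb[rule_format, of "z ^ (2 ^ (A ^ k))"] by simp
    then have "real A ^ k * \<bar>h (z ^ (2 ^ (A ^ k)))\<bar> \<le> real A ^ k * (B * norm z ^ (2 ^ (A ^ k)))"
      by (intro mult_left_mono) auto
    then show ?thesis unfolding abs_mult by (simp add: mult.left_commute)
  qed
  have summ: "summable (\<lambda>k. real A ^ k * h (z ^ (2 ^ (A ^ k))))" if z: "z \<in> unit_disc" for z
  proof (rule summable_comparison_test[OF _ summable_mult[OF lacunary(1)[OF A4, of "norm z"]]])
    show "\<exists>N. \<forall>n\<ge>N. norm (real A ^ n * h (z ^ 2 ^ A ^ n)) \<le> B * (real A ^ n * norm z ^ 2 ^ A ^ n)"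
      using tb[OF z] by auto
  qed (use z in auto)
  show "\<forall>z\<in>unit_disc. summable (\<lambda>k. real A ^ k * h (z ^ (2 ^ (A ^ k))))" using summ by blast
  show "class_K (\<lambda>z. \<Sum>k. real A ^ k * h (z ^ (2 ^ (A ^ k))))"
    unfolding class_K_def
  proof (intro conjI exI ballI)
    show "harmonic_on (\<lambda>z. \<Sum>k. real A ^ k * h (z ^ (2 ^ (A ^ k)))) unit_disc"
      by (rule harmonic_sum_main[OF harm B hb]) (use A4 in simp)
    fix z :: complex assume z: "z \<in> unit_disc"
    have nz: "0 \<le> norm z" "norm z < 1" using z by auto
    have "(\<Sum>k. real A ^ k * h (z ^ (2 ^ (A ^ k)))) \<le> (\<Sum>k. B * (real A ^ k * norm z ^ (2 ^ (A ^ k))))"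
    proof (rule suminf_le)
      fix k show "real A ^ k * h (z ^ 2 ^ A ^ k) \<le> B * (real A ^ k * norm z ^ 2 ^ A ^ k)"
        using tb[OF z, of k] by linarith
    qed (use summ[OF z] summable_mult[OF lacunary(1)[OF A4 nz]] in auto)
    also have "\<dots> = B * (\<Sum>k. real A ^ k * norm z ^ (2 ^ (A ^ k)))"
      by (rule suminf_mult[OF lacunary(1)[OF A4 nz]])
    also have "\<dots> \<le> B * ((4 + 4 * real A) * (1 + ln (1 / (1 - norm z))))"
      using B lacunary(2)[OF A4 nz] by (intro mult_left_mono) auto
    also have "1 + ln (1 / (1 - norm z)) = ln (exp 1 / (1 - norm z))"
      using nz by (simp add: ln_div)
    finally show "(\<Sum>k. real A ^ k * h (z ^ (2 ^ (A ^ k)))) \<le> B * (4 + 4 * real A) * ln (exp 1 / (1 - norm z))"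
      by (simp add: mult.assoc)
  qed
  show "\<exists>d>0. \<forall>\<theta>\<in>{0..<2*pi}.
              Limsup (at_left (1::real))
                (\<lambda>r. ereal ((\<Sum>k. real A ^ k * h ((complex_of_real r * cis \<theta>) ^ (2 ^ (A ^ k))))
                             / \<bar>ln (1 - r)\<bar>)) \<ge> ereal d"
  proof (intro exI conjI ballI)
    show "(0::real) < 1/8" by simp
    fix \<theta> :: real assume "\<theta> \<in> {0..<2*pi}"
    show "ereal (1/8) \<le> Limsup (at_left (1::real))
                (\<lambda>r. ereal ((\<Sum>k. real A ^ k * h ((complex_of_real r * cis \<theta>) ^ (2 ^ (A ^ k))))
                             / \<bar>ln (1 - r)\<bar>))"
    proof (rule Limsup_ge_at_left)
      fix \<delta> :: real assume d: "\<delta> > 0"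
      obtain K where K: "3 / \<delta> < 2 ^ K" using real_arch_pow[of 2 "3 / \<delta>"] by auto
      have "K \<le> A ^ K"
      proof -
        have "K < 2 ^ K" by (rule less_exp)
        also have "(2::nat) ^ K \<le> A ^ K" using A4 by (intro power_mono) auto
        finally show ?thesis by simp
      qed
      then have p: "(2::real) ^ K \<le> 2 ^ (A ^ K)" by (rule power_increasing) simp
      have "real ((2::nat) ^ (A ^ K)) = (2::real) ^ (A ^ K)" by simp
      then have NK: "3 / \<delta> < real ((2::nat) ^ (A ^ K))" using K p by linarith
      have "3 / real ((2::nat) ^ (A ^ K)) < \<delta>"
        using NK d by (simp add: field_simps)
      then obtain r where r: "1 - 3 / real ((2::nat) ^ (A ^ K)) < r" "r < 1"
          "1/8 \<le> (\<Sum>k. real A ^ k * h ((complex_of_real r * cis \<theta>) ^ (2 ^ (A ^ k)))) / \<bar>ln (1 - r)\<bar>"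
        using key_point[OF hb B sup A4 A36, of K \<theta>] by blast
      show "\<exists>r. 1 - \<delta> < r \<and> r < 1 \<and> ereal (1/8) \<le> ereal ((\<Sum>k. real A ^ k * h ((complex_of_real r * cis \<theta>) ^ (2 ^ (A ^ k)))) / \<bar>ln (1 - r)\<bar>)"
        using r \<open>3 / real ((2::nat) ^ (A ^ K)) < \<delta>\<close> by (intro exI[of _ r]) auto
    qed
  qed
qed

end
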